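(* Let $\vartheta:=\frac{1}{\sqrt2}\sup_{f\in U_1}A(H(\mathfrak{g}_f))$. Then $\vartheta\ge0.090435$.
   Context: $U_1$ is the set of absolutely continuous $f:[0,1]\to\mathbb{R}$ with $f(0)=0$ and $\int_0^1f'(s)^2ds\le1$. $\mathfrak{g}_f(0):=0$ and $\mathfrak{g}_f(t):=\frac1t\int_0^tf(s)\,ds$ for $0<t\le1$. $H(g):=\operatorname{hull}\{(t,g(t)):0\le t\le1\}\subset\mathbb{R}^2$, and $A$ denotes planar area. (This $\vartheta$ is the constant such that, for a planar random walk with i.i.d. increments of finite second moment, identity covariance and non-zero drift $\mu$, the convex hull $\mathcal G_n$ of its centre-of-mass process $G_n=\frac1n\sum_{i=1}^nS_i$ satisfies $\limsup_n A(\mathcal G_n)/(n^{3/2}\sqrt{\log\log n})=\vartheta\|\mu\|$ a.s.) *)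

theory Defs
  imports "HOL-Analysis.Analysis"
begin

definition abs_continuous_on :: "real \<Rightarrow> real \<Rightarrow> (real \<Rightarrow> real) \<Rightarrow> bool" where
  "abs_continuous_on a b f \<longleftrightarrow>
     (\<forall>\<epsilon>>0. \<exists>\<delta>>0. \<forall>(n::nat) (l::nat \<Rightarrow> real) (r::nat \<Rightarrow> real).
        (\<forall>i<n. a \<le> l i \<and> l i \<le> r i \<and> r i \<le> b) \<and>
        (\<forall>i<n. \<forall>j<n. i \<noteq> j \<longrightarrow> r i \<le> l j \<or> r j \<le> l i) \<and>
        (\<Sum>i<n. r i - l i) < \<delta>
        \<longrightarrow> (\<Sum>i<n. \<bar>f (r i) - f (l i)\<bar>) < \<epsilon>)"

definition U1 :: "(real \<Rightarrow> real) set" where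
  "U1 = {f. abs_continuous_on 0 1 f \<and> f 0 = 0 \<and>
           (\<exists>f'. (AE s in lebesgue. s \<in> {0..1} \<longrightarrow>
                     (f has_real_derivative f' s) (at s within {0..1})) \<and>
                 (\<lambda>s. (f' s)\<^sup>2) integrable_on {0..1} \<and>
                 integral {0..1} (\<lambda>s. (f' s)\<^sup>2) \<le> 1)}"

definition gmean :: "(real \<Rightarrow> real) \<Rightarrow> real \<Rightarrow> real" where
  "gmean f t = (if t = 0 then 0 else (1 / t) * integral {0..t} f)"

definition Hull :: "(real \<Rightarrow> real) \<Rightarrow> (real \<times> real) set" where
  "Hull g = convex hull ((\<lambda>t. (t, g t)) ` {0..1})"

definition area :: "(real \<times> real) set \<Rightarrow> real" where
  "area S = measure lebesgue S"

definition theta :: real where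
  "theta = (1 / sqrt 2) * Sup {area (Hull (gmean f)) | f. f \<in> U1}"

end

theory Submission
  imports Defs
begin


lemma drop_vec_image: "(\<lambda>x::real^1. x $ 1) ` vec ` A = A"
  by (force simp: image_iff)

lemma vec_measure:
  fixes A :: "real set"
  assumes "(vec ` A :: (real^1) set) \<in> lmeasurable"
  shows "A \<in> lmeasurable \<and> measure lebesgue A = measure lebesgue (vec ` A :: (real^1) set)"
proof -
  obtain y where y: "((\<lambda>x. 1::real) has_integral y) (vec ` A :: (real^1) set)"
    using assms unfolding lmeasurable_iff_integrable_on integrable_on_def by blast
  have "(((\<lambda>x::real^1. 1::real) \<circ> vec) has_integral y) ((\<lambda>x::real^1. x $ 1) ` vec ` A)"
    by (rule has_integral_vec1_I[OF y])
  then have y2: "((\<lambda>x. 1::real) has_integral y) A" by (simp add: drop_vec_image o_def)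
  then have A: "A \<in> lmeasurable" unfolding lmeasurable_iff_integrable_on by blast
  have "measure lebesgue A = y" using lmeasure_integral[OF A] y2 by (simp add: integral_unique)
  moreover have "measure lebesgue (vec ` A :: (real^1) set) = y"
    using lmeasure_integral[OF assms] y by (simp add: integral_unique)
  ultimately show ?thesis using A by simp
qed

lemma det_scale_1: "det (matrix ((*\<^sub>R) c) :: real^1^1) = c"
  by (simp add: det_1 matrix_def)

lemma image_measure_bound_real:
  fixes f f' g :: "real \<Rightarrow> real"
  assumes S: "S \<in> sets lebesgue"
    and d: "\<And>x. x \<in> S \<Longrightarrow> (f has_real_derivative f' x) (at x within S)"
    and g: "g integrable_on S" and b: "\<And>x. x \<in> S \<Longrightarrow> \<bar>f' x\<bar> \<le> g x"
  shows "f ` S \<in> lmeasurable \<and> measure lebesgue (f ` S) \<le> integral S g"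
proof -
  let ?S' = "vec ` S :: (real^1) set"
  define F where "F x = (vec (f (x $ 1)) :: real^1)" for x :: "real^1"
  define F' where "F' x = (\<lambda>h::real^1. f' (x $ 1) *\<^sub>R h)" for x :: "real^1"
  have S': "?S' \<in> sets lebesgue"
    by (auto intro: differentiable_image_in_sets_lebesgue [OF S] differentiable_vec)
  have der: "(F has_derivative F' x) (at x within ?S')" if x: "x \<in> ?S'" for x
  proof -
    obtain z where z: "z \<in> S" "x = vec z" using x by blast
    have "(f has_derivative (\<lambda>h. h * f' z)) (at z within S)"
      using d[OF z(1)] unfolding has_field_derivative_def by (simp add: mult.commute[of _ "f' z"])
    then have "((\<lambda>x. vec (f (x $ 1))) has_derivative (*\<^sub>R) (f' z)) (at ((vec z)::real^1) within vec ` S)"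
      by (rule has_derivative_vector_1)
    then show ?thesis using z by (simp add: F_def[abs_def] F'_def[abs_def])
  qed
  have detF: "det (matrix (F' x)) = f' (x $ 1)" for x
    unfolding F'_def by (rule det_scale_1)
  have meas: "(\<lambda>x. f' (x $ 1)) \<in> borel_measurable (lebesgue_on ?S')"
    using borel_measurable_det_Jacobian[OF S' der] by (simp add: detF)
  have gint: "(\<lambda>x::real^1. g (x $ 1)) integrable_on ?S'"
  proof -
    obtain y where y: "(g has_integral y) S" using g by blast
    have "(((\<lambda>x::real^1. g (x $ 1)) \<circ> vec) has_integral y) ((\<lambda>x::real^1. x $ 1) ` ?S')"
      using y by (simp add: drop_vec_image o_def)
    then have "((\<lambda>x::real^1. g (x $ 1)) has_integral y) ?S'" by (rule has_integral_vec1_D)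
    then show ?thesis by blast
  qed
  have intS: "(\<lambda>x. \<bar>f' (x $ 1)\<bar>) integrable_on ?S'"
    by (rule measurable_bounded_by_integrable_imp_integrable_real[OF _ gint _ S'])
       (use meas b in auto)
  have int2: "(\<lambda>x. \<bar>det (matrix (F' x))\<bar>) integrable_on ?S'" using intS by (simp add: detF)
  have m1: "F ` ?S' \<in> lmeasurable"
    by (rule measurable_differentiable_image[OF S' der int2])
  have m2: "measure lebesgue (F ` ?S') \<le> integral ?S' (\<lambda>x. \<bar>det (matrix (F' x))\<bar>)"
    by (rule measure_differentiable_image[OF S' der int2])
  have FS: "F ` ?S' = vec ` (f ` S)" by (auto simp: F_def image_image)
  have "integral ?S' (\<lambda>x. \<bar>det (matrix (F' x))\<bar>) \<le> integral ?S' (\<lambda>x::real^1. g (x $ 1))"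
    by (rule integral_le[OF int2 gint]) (use b in \<open>auto simp: detF\<close>)
  also have "\<dots> = integral S g"
    by (simp add: integral_vec1_eq[of ?S'] drop_vec_image o_def)
  finally have "measure lebesgue (F ` ?S') \<le> integral S g" using m2 by linarith
  then show ?thesis using vec_measure[of "f ` S"] m1 FS by simp
qed



lemma ac_cont:
  assumes "abs_continuous_on a b f"
  shows "continuous_on {a..b} f"
  unfolding continuous_on_iff
proof (intro ballI allI impI)
  fix x e :: real assume x: "x \<in> {a..b}" and e: "0 < e"
  obtain d where dpos: "d > 0" and D: "\<forall>(n::nat) (l::nat \<Rightarrow> real) (r::nat \<Rightarrow> real).
        (\<forall>i<n. a \<le> l i \<and> l i \<le> r i \<and> r i \<le> b) \<and>
        (\<forall>i<n. \<forall>j<n. i \<noteq> j \<longrightarrow> r i \<le> l j \<or> r j \<le> l i) \<and>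
        (\<Sum>i<n. r i - l i) < d
        \<longrightarrow> (\<Sum>i<n. \<bar>f (r i) - f (l i)\<bar>) < e"
    using assms e unfolding abs_continuous_on_def by blast
  show "\<exists>d>0. \<forall>x'\<in>{a..b}. dist x' x < d \<longrightarrow> dist (f x') (f x) < e"
  proof (intro exI[of _ d] conjI ballI impI)
    fix y assume y: "y \<in> {a..b}" and dy: "dist y x < d"
    have c1: "max x y - min x y < d" using dy by (auto simp: dist_real_def)
    have c2: "a \<le> min x y" "min x y \<le> max x y" "max x y \<le> b" using x y by auto
    have "(\<Sum>i<(1::nat). \<bar>f ((\<lambda>_. max x y) i) - f ((\<lambda>_. min x y) i)\<bar>) < e"
      using D[rule_format, of 1 "\<lambda>_. min x y" "\<lambda>_. max x y"] c1 c2 by simp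
    then have "\<bar>f (max x y) - f (min x y)\<bar> < e" by simp
    then show "dist (f y) (f x) < e"
      by (cases "x \<le> y") (auto simp: dist_real_def abs_minus_commute)
  qed (use dpos in simp)
qed


lemma measure_image_interval:
  fixes f :: "real \<Rightarrow> real"
  assumes cont: "continuous_on {a..b} f" and ab: "a \<le> b"
  shows "\<exists>x y. a \<le> x \<and> x \<le> y \<and> y \<le> b \<and> f ` {a..b} \<in> lmeasurable \<and>
     measure lebesgue (f ` {a..b}) \<le> \<bar>f y - f x\<bar>"
proof -
  obtain u v where uv: "f ` {a..b} = {u..v}" "u \<le> v"
    using continuous_image_closed_interval[OF ab cont] by blast
  have "u \<in> f ` {a..b}" "v \<in> f ` {a..b}" using uv by auto
  then obtain p q where p: "p \<in> {a..b}" "f p = u" and q: "q \<in> {a..b}" "f q = v" by blast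
  have m: "measure lebesgue (f ` {a..b}) = v - u" using uv by simp
  show ?thesis
  proof (intro exI conjI)
    show "a \<le> min p q" "min p q \<le> max p q" "max p q \<le> b" using p q by auto
    show "f ` {a..b} \<in> lmeasurable" using uv by simp
    show "measure lebesgue (f ` {a..b}) \<le> \<bar>f (max p q) - f (min p q)\<bar>"
      using m p q uv by (cases "p \<le> q") (auto simp: max_def min_def)
  qed
qed

lemma ac_family_sum:
  fixes f :: "real \<Rightarrow> real" and c d :: "real set \<Rightarrow> real"
  assumes D: "\<forall>(n::nat) (l::nat \<Rightarrow> real) (r::nat \<Rightarrow> real).
        (\<forall>i<n. 0 \<le> l i \<and> l i \<le> r i \<and> r i \<le> 1) \<and>
        (\<forall>i<n. \<forall>j<n. i \<noteq> j \<longrightarrow> r i \<le> l j \<or> r j \<le> l i) \<and>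
        (\<Sum>i<n. r i - l i) < \<delta>
        \<longrightarrow> (\<Sum>i<n. \<bar>f (r i) - f (l i)\<bar>) < e"
  and cont: "continuous_on {0..1} f"
  and F: "finite F"
  and FK: "\<And>K. K \<in> F \<Longrightarrow> K = {c K..d K} \<and> c K < d K \<and> 0 \<le> c K \<and> d K \<le> 1"
  and disj: "\<And>K K'. K \<in> F \<Longrightarrow> K' \<in> F \<Longrightarrow> K \<noteq> K' \<Longrightarrow> d K \<le> c K' \<or> d K' \<le> c K"
  and small: "(\<Sum>K\<in>F. d K - c K) < \<delta>"
  shows "(\<Sum>K\<in>F. measure lebesgue (f ` K)) \<le> e"
proof -
  have "\<forall>K\<in>F. \<exists>x y. c K \<le> x \<and> x \<le> y \<and> y \<le> d K \<and>
           measure lebesgue (f ` K) \<le> \<bar>f y - f x\<bar>"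
  proof
    fix K assume K: "K \<in> F"
    have "continuous_on {c K..d K} f"
    proof -
      have e: "0 \<le> c K" "d K \<le> 1" using FK[OF K] by auto
      have "{c K..d K} \<subseteq> {0..1}" using e by auto
      then show ?thesis by (rule continuous_on_subset[OF cont])
    qed
    then show "\<exists>x y. c K \<le> x \<and> x \<le> y \<and> y \<le> d K \<and> measure lebesgue (f ` K) \<le> \<bar>f y - f x\<bar>"
      using measure_image_interval[of "c K" "d K" f] FK[OF K] by auto
  qed
  then obtain xK yK where xy: "\<And>K. K \<in> F \<Longrightarrow> c K \<le> xK K \<and> xK K \<le> yK K \<and> yK K \<le> d K \<and>
           measure lebesgue (f ` K) \<le> \<bar>f (yK K) - f (xK K)\<bar>"
    by metis
  obtain h where h: "bij_betw h {..<card F} F"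
    using ex_bij_betw_nat_finite[OF F] by (auto simp: atLeast0LessThan)
  define n where "n = card F"
  define l where "l i = xK (h i)" for i
  define r where "r i = yK (h i)" for i
  have hF: "h i \<in> F" if "i < n" for i using h that by (auto simp: n_def bij_betw_def)
  have c1: "\<forall>i<n. 0 \<le> l i \<and> l i \<le> r i \<and> r i \<le> 1"
  proof (intro allI impI)
    fix i assume "i < n"
    then have "h i \<in> F" by (rule hF)
    then show "0 \<le> l i \<and> l i \<le> r i \<and> r i \<le> 1"
      using xy[of "h i"] FK[of "h i"] by (auto simp: l_def r_def)
  qed
  have c2: "\<forall>i<n. \<forall>j<n. i \<noteq> j \<longrightarrow> r i \<le> l j \<or> r j \<le> l i"
  proof (intro allI impI)
    fix i j assume ij: "i < n" "j < n" "i \<noteq> j"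
    have "h i \<noteq> h j" using h ij by (auto simp: n_def bij_betw_def inj_on_def)
    then have "d (h i) \<le> c (h j) \<or> d (h j) \<le> c (h i)" using disj hF ij by blast
    then show "r i \<le> l j \<or> r j \<le> l i"
      using xy[OF hF[OF ij(1)]] xy[OF hF[OF ij(2)]] by (auto simp: l_def r_def)
  qed
  have "(\<Sum>i<n. r i - l i) \<le> (\<Sum>i<n. d (h i) - c (h i))"
  proof (rule sum_mono)
    fix i assume "i \<in> {..<n}"
    then have "h i \<in> F" using hF by auto
    then show "r i - l i \<le> d (h i) - c (h i)" using xy[of "h i"] by (auto simp: l_def r_def)
  qed
  also have "\<dots> = (\<Sum>K\<in>F. d K - c K)"
    using sum.reindex_bij_betw[OF h, of "\<lambda>K. d K - c K"] by (simp add: n_def)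
  also have "\<dots> < \<delta>" by (rule small)
  finally have c3: "(\<Sum>i<n. r i - l i) < \<delta>" .
  have lt: "(\<Sum>i<n. \<bar>f (r i) - f (l i)\<bar>) < e" using D c1 c2 c3 by blast
  have "(\<Sum>K\<in>F. measure lebesgue (f ` K)) \<le> (\<Sum>K\<in>F. \<bar>f (yK K) - f (xK K)\<bar>)"
    by (rule sum_mono) (use xy in auto)
  also have "\<dots> = (\<Sum>i<n. \<bar>f (r i) - f (l i)\<bar>)"
    using sum.reindex_bij_betw[OF h, of "\<lambda>K. \<bar>f (yK K) - f (xK K)\<bar>"] by (simp add: n_def l_def r_def)
  finally show ?thesis using lt by simp
qed


lemma lusin:
  fixes f :: "real \<Rightarrow> real"
  assumes ac: "abs_continuous_on 0 1 f" and N: "negligible N" "N \<subseteq> {0..1}"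
  shows "negligible (f ` N)"
proof -
  have cont: "continuous_on {0..1} f" by (rule ac_cont[OF ac])
  show ?thesis unfolding negligible_outer_le
  proof (intro allI impI)
    fix e :: real assume e: "e > 0"
    obtain \<delta> where \<delta>: "\<delta> > 0" and D: "\<forall>(n::nat) (l::nat \<Rightarrow> real) (r::nat \<Rightarrow> real).
        (\<forall>i<n. 0 \<le> l i \<and> l i \<le> r i \<and> r i \<le> 1) \<and>
        (\<forall>i<n. \<forall>j<n. i \<noteq> j \<longrightarrow> r i \<le> l j \<or> r j \<le> l i) \<and>
        (\<Sum>i<n. r i - l i) < \<delta>
        \<longrightarrow> (\<Sum>i<n. \<bar>f (r i) - f (l i)\<bar>) < e"
      using ac e unfolding abs_continuous_on_def by blast
    have Nm: "N \<in> lmeasurable" using N by (simp add: negligible_imp_measurable)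
    have N0: "measure lebesgue N = 0" using N negligible_imp_measure0 by blast
    have N1: "N \<subseteq> cbox 0 1" using N by simp
    have \<delta>2: "\<delta>/2 > 0" using \<delta> by simp
    obtain \<D> where D1: "countable \<D>"
      and D2: "\<And>K. K \<in> \<D> \<Longrightarrow> K \<subseteq> cbox 0 1 \<and> K \<noteq> {} \<and> (\<exists>c d. K = cbox c d)"
      and D3: "pairwise (\<lambda>A B. interior A \<inter> interior B = {}) \<D>"
      and "\<And>u v. cbox u v \<in> \<D> \<Longrightarrow> \<exists>n. \<forall>i \<in> Basis. v \<bullet> i - u \<bullet> i = (1 \<bullet> i - 0 \<bullet> i)/2^n"
      and D5: "\<And>K. \<lbrakk>K \<in> \<D>; box 0 (1::real) \<noteq> {}\<rbrakk> \<Longrightarrow> interior K \<noteq> {}"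
      and D6: "N \<subseteq> \<Union>\<D>" and D7: "\<Union>\<D> \<in> lmeasurable"
      and D8: "measure lebesgue (\<Union>\<D>) \<le> measure lebesgue N + \<delta>/2"
      using measurable_outer_intervals_bounded[OF Nm N1 \<delta>2] by blast
    have "\<forall>K\<in>\<D>. \<exists>c d. K = {c..d} \<and> c < d \<and> 0 \<le> c \<and> d \<le> 1"
    proof
      fix K assume K: "K \<in> \<D>"
      obtain c d where cd: "K = cbox c d" using D2[OF K] by blast
      have "interior K \<noteq> {}" using D5[OF K] by simp
      then have "c < d" using cd by (auto simp: interior_cbox)
      moreover have "c \<in> K" "d \<in> K" using cd \<open>c < d\<close> by auto
      then have "0 \<le> c" "d \<le> 1" using D2[OF K] by auto
      ultimately show "\<exists>c d. K = {c..d} \<and> c < d \<and> 0 \<le> c \<and> d \<le> 1" using cd by auto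
    qed
    then obtain c d where cd: "\<And>K. K \<in> \<D> \<Longrightarrow> K = {c K..d K} \<and> c K < d K \<and> 0 \<le> c K \<and> d K \<le> 1"
      by metis
    have disj: "d K \<le> c K' \<or> d K' \<le> c K" if K: "K \<in> \<D>" "K' \<in> \<D>" "K \<noteq> K'" for K K'
    proof (rule ccontr)
      assume "\<not> (d K \<le> c K' \<or> d K' \<le> c K)"
      then have lt: "c K' < d K" "c K < d K'" by auto
      define m where "m = (max (c K) (c K') + min (d K) (d K'))/2"
      have "interior K \<inter> interior K' = {}" using D3 K unfolding pairwise_def by blast
      moreover have "interior K = {c K<..<d K}" "interior K' = {c K'<..<d K'}"
        using cd[OF K(1)] cd[OF K(2)] by (metis interior_atLeastAtMost_real)+
      moreover have "m \<in> {c K<..<d K}" "m \<in> {c K'<..<d K'}"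
        using lt cd[OF K(1)] cd[OF K(2)] by (auto simp: m_def max_def min_def)
      ultimately show False by auto
    qed
    have fKm: "f ` K \<in> lmeasurable" if K: "K \<in> \<D>" for K
    proof -
      have e2: "0 \<le> c K" "d K \<le> 1" "c K \<le> d K" using cd[OF K] by auto
      have "{c K..d K} \<subseteq> {0..1}" using e2 by auto
      then have "continuous_on {c K..d K} f" by (rule continuous_on_subset[OF cont])
      then have "f ` {c K..d K} \<in> lmeasurable" using measure_image_interval[OF _ e2(3)] by blast
      then show ?thesis using cd[OF K] by metis
    qed
    have key: "(\<Sum>K\<in>F. measure lebesgue (f ` K)) \<le> e" if F: "F \<subseteq> \<D>" "finite F" for F
    proof (rule ac_family_sum[OF D cont F(2)])
      show "K = {c K..d K} \<and> c K < d K \<and> 0 \<le> c K \<and> d K \<le> 1" if "K \<in> F" for K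
        using cd F that by blast
      show "d K \<le> c K' \<or> d K' \<le> c K" if "K \<in> F" "K' \<in> F" "K \<noteq> K'" for K K'
        using disj F that by blast
      have Km: "K \<in> lmeasurable" if "K \<in> F" for K
      proof -
        have "K = {c K..d K}" using cd[of K] F that by blast
        then show ?thesis by (metis lmeasurable_interval(1))
      qed
      have pw: "pairwise (\<lambda>S T. negligible (S \<inter> T)) F"
        unfolding pairwise_def
      proof (intro ballI impI)
        fix K K' assume KK: "K \<in> F" "K' \<in> F" "K \<noteq> K'"
        then have KD: "K \<in> \<D>" "K' \<in> \<D>" using F by auto
        have eqK: "K = {c K..d K}" "K' = {c K'..d K'}" using cd KD by blast+
        have "K \<inter> K' \<subseteq> {d K, d K'}"
        proof
          fix x assume x: "x \<in> K \<inter> K'"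
          have "c K \<le> x \<and> x \<le> d K" using x eqK(1) by (metis IntD1 atLeastAtMost_iff)
          moreover have "c K' \<le> x \<and> x \<le> d K'" using x eqK(2) by (metis IntD2 atLeastAtMost_iff)
          ultimately show "x \<in> {d K, d K'}" using disj[OF KD KK(3)] by auto
        qed
        then show "negligible (K \<inter> K')"
          by (rule negligible_subset[rotated]) simp
      qed
      have "(\<Sum>K\<in>F. d K - c K) = (\<Sum>K\<in>F. measure lebesgue K)"
      proof (rule sum.cong[OF refl])
        fix K assume "K \<in> F"
        then have "K = {c K..d K}" "c K < d K" using cd F by blast+
        then show "d K - c K = measure lebesgue K" by (metis measure_lborel_Icc less_imp_le measure_completion sets_lborel atLeastAtMost_borel)
      qed
      also have "\<dots> = measure lebesgue (\<Union>F)"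
        by (rule measure_negligible_finite_Union[OF F(2) Km pw, symmetric])
      also have "\<dots> \<le> measure lebesgue (\<Union>\<D>)"
        by (rule measure_mono_fmeasurable) (use F D7 Km in auto)
      also have "\<dots> < \<delta>" using D8 N0 \<delta> by simp
      finally show "(\<Sum>K\<in>F. d K - c K) < \<delta>" .
    qed
    show "\<exists>T. f ` N \<subseteq> T \<and> T \<in> lmeasurable \<and> measure lebesgue T \<le> e"
    proof (cases "\<D> = {}")
      case True
      then have "N = {}" using D6 by auto
      then show ?thesis using e by (intro exI[of _ "{}"]) auto
    next
      case False
      define Kn where "Kn = from_nat_into \<D>"
      have rng: "range Kn = \<D>" using False D1 by (simp add: Kn_def)
      define S where "S n = (\<Union>K\<in>Kn ` {..n}. f ` K)" for n
      have Ssub: "Kn ` {..n} \<subseteq> \<D>" for n using rng by auto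
      have Sm: "S n \<in> lmeasurable" for n
        unfolding S_def by (rule fmeasurable.finite_UN) (use Ssub fKm in auto)
      have Sle: "measure lebesgue (S n) \<le> e" for n
      proof -
        have "measure lebesgue (S n) \<le> (\<Sum>K\<in>Kn ` {..n}. measure lebesgue (f ` K))"
          unfolding S_def by (rule measure_UNION_le) (use Ssub fKm in auto)
        also have "\<dots> \<le> e" by (rule key[OF Ssub]) simp
        finally show ?thesis .
      qed
      have nest: "S n \<subseteq> S (Suc n)" for n unfolding S_def
        by (intro UN_mono image_mono) auto
      have U: "(\<Union>n. S n) = (\<Union>K\<in>\<D>. f ` K)" unfolding S_def using rng by auto
      have Um: "(\<Union>n. S n) \<in> lmeasurable" by (rule measurable_nested_Union[of S e, OF Sm Sle nest])
      have lim: "(\<lambda>n. measure lebesgue (S n)) \<longlonglongrightarrow> measure lebesgue (\<Union>n. S n)"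
        by (rule measure_nested_Union[of S e, OF Sm Sle nest])
      have "measure lebesgue (\<Union>n. S n) \<le> e"
        by (rule LIMSEQ_le_const2[OF lim]) (use Sle in auto)
      moreover have "f ` N \<subseteq> (\<Union>n. S n)" unfolding U using D6 by blast
      ultimately show ?thesis using Um by blast
    qed
  qed
qed



lemma U1_bound:
  assumes "f \<in> U1" "t \<in> {0..1}"
  shows "\<bar>f t\<bar> \<le> 1"
proof -
  obtain f' where ac: "abs_continuous_on 0 1 f" and f0: "f 0 = 0"
    and AE: "AE s in lebesgue. s \<in> {0..1} \<longrightarrow> (f has_real_derivative f' s) (at s within {0..1})"
    and int: "(\<lambda>s. (f' s)\<^sup>2) integrable_on {0..1}"
    and le: "integral {0..1} (\<lambda>s. (f' s)\<^sup>2) \<le> 1"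
    using assms(1) unfolding U1_def by blast
  have cont: "continuous_on {0..1} f" by (rule ac_cont[OF ac])
  obtain N where N: "{s \<in> space lebesgue. \<not> (s \<in> {0..1} \<longrightarrow> (f has_real_derivative f' s) (at s within {0..1}))} \<subseteq> N"
    and Ne: "emeasure lebesgue N = 0" and Ns: "N \<in> sets lebesgue"
    using AE by (rule AE_E)
  have Nnull: "N \<in> null_sets lebesgue" using Ne Ns by (simp add: null_sets_def)
  define N0 where "N0 = N \<inter> {0..1}"
  have negN: "negligible N" using Nnull by (simp add: negligible_iff_null_sets)
  have negN0: "negligible N0" unfolding N0_def by (rule negligible_subset[OF negN]) auto
  define G where "G = {0..1} - N"
  have Gs: "G \<in> sets lebesgue" unfolding G_def using Nnull by auto
  have der: "(f has_real_derivative f' x) (at x within G)" if "x \<in> G" for x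
  proof -
    have "(f has_real_derivative f' x) (at x within {0..1})" using N that by (auto simp: G_def)
    then show ?thesis by (rule DERIV_subset) (auto simp: G_def)
  qed
  define h where "h s = (1 + (f' s)\<^sup>2) / 2" for s
  have hint: "(h has_integral (1 + integral {0..1} (\<lambda>s. (f' s)\<^sup>2)) / 2) {0..1}"
  proof -
    have "((\<lambda>s. 1 + (f' s)\<^sup>2) has_integral (1 + integral {0..1} (\<lambda>s. (f' s)\<^sup>2))) {0..1}"
      using has_integral_add[OF has_integral_const_real[of 1 0 1] integrable_integral[OF int]] by simp
    then show ?thesis unfolding h_def by (rule has_integral_divide)
  qed
  have negd: "negligible {x \<in> {0..1} - G. h x \<noteq> 0}" "negligible {x \<in> G - {0..1}. h x \<noteq> 0}"
    by (rule negligible_subset[OF negN]; auto simp: G_def)+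
  have hintG: "(h has_integral (1 + integral {0..1} (\<lambda>s. (f' s)\<^sup>2)) / 2) G"
    using hint has_integral_spike_set_eq[OF negd] by blast
  have hb: "\<bar>f' x\<bar> \<le> h x" for x
  proof -
    have "0 \<le> (\<bar>f' x\<bar> - 1)\<^sup>2" by simp
    then show ?thesis by (simp add: h_def power2_eq_square algebra_simps abs_mult_self_eq)
  qed
  have img: "f ` G \<in> lmeasurable \<and> measure lebesgue (f ` G) \<le> integral G h"
    by (rule image_measure_bound_real[OF Gs der has_integral_integrable[OF hintG] hb])
  have "integral G h \<le> 1" using hintG le by (simp add: integral_unique)
  then have mG: "measure lebesgue (f ` G) \<le> 1" using img by linarith
  have negfN0: "negligible (f ` N0)" by (rule lusin[OF ac negN0]) (auto simp: N0_def)
  have sub: "f ` {0..1} \<subseteq> f ` G \<union> f ` N0" by (auto simp: G_def N0_def)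
  have cpt: "compact (f ` {0..1})" by (rule compact_continuous_image[OF cont]) simp
  have "measure lebesgue (f ` {0..1}) \<le> measure lebesgue (f ` G \<union> f ` N0)"
    by (rule measure_mono_fmeasurable[OF sub])
       (use lmeasurable_compact[OF cpt] img negfN0 in \<open>auto intro: negligible_imp_measurable\<close>)
  also have "\<dots> \<le> measure lebesgue (f ` G) + measure lebesgue (f ` N0)"
    by (rule measure_Un_le) (use img negfN0 in \<open>auto intro: negligible_imp_sets\<close>)
  also have "\<dots> \<le> 1" using mG negfN0 by (simp add: negligible_imp_measure0)
  finally have m01: "measure lebesgue (f ` {0..1}) \<le> 1" .
  have conn: "connected (f ` {0..1})" by (rule connected_continuous_image[OF cont]) simp
  have in0: "0 \<in> f ` {0..1}" using f0 by (metis atLeastAtMost_iff image_eqI order_refl zero_le_one)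
  have int: "f t \<in> f ` {0..1}" using assms(2) by simp
  have Icc: "{min 0 (f t)..max 0 (f t)} \<subseteq> f ` {0..1}"
    by (rule connected_contains_Icc[OF conn]) (use in0 int in \<open>auto simp: min_def max_def\<close>)
  have "\<bar>f t\<bar> = measure lebesgue {min 0 (f t)..max 0 (f t)}" by (simp add: min_def max_def)
  also have "\<dots> \<le> measure lebesgue (f ` {0..1})"
    by (rule measure_mono_fmeasurable[OF Icc]) (use lmeasurable_compact[OF cpt] in auto)
  finally show ?thesis using m01 by linarith
qed



definition f0 :: "real \<Rightarrow> real" where
  "f0 t = 11/4*t - 231/40*t^2 + 121/40*t^3"
definition f0' :: "real \<Rightarrow> real" where
  "f0' t = 11/4 - 231/20*t + 363/40*t^2"
definition g0 :: "real \<Rightarrow> real" where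
  "g0 t = 11/8*t - 77/40*t^2 + 121/160*t^3"

lemma f0_deriv: "(f0 has_real_derivative f0' t) (at t within S)"
  unfolding f0_def f0'_def
  by (rule derivative_eq_intros refl | simp)+  

lemma f0'_sq_integral: "((\<lambda>s. (f0' s)\<^sup>2) has_integral 121/125) {0..1}"
proof -
  define F where "F t = 121/16*t - 2541/80*t^2 + 12221/200*t^3 - 83853/1600*t^4 + 131769/8000*t^5" for t :: real
  have "((\<lambda>s. (f0' s)\<^sup>2) has_integral F 1 - F 0) {0..1}"
  proof (rule fundamental_theorem_of_calculus)
    fix x :: real assume "x \<in> {0..1}"
    have "(F has_real_derivative (f0' x)\<^sup>2) (at x within {0..1})"
      unfolding F_def f0'_def
      apply (rule derivative_eq_intros refl | simp)+
      by (simp add: eval_nat_numeral algebra_simps)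
    then show "(F has_vector_derivative (f0' x)\<^sup>2) (at x within {0..1})"
      by (simp add: has_real_derivative_iff_has_vector_derivative)
  qed simp
  then show ?thesis by (simp add: F_def)
qed

lemma f0_lip:
  assumes "0 \<le> l" "l \<le> 1" "0 \<le> r" "r \<le> 1"
  shows "\<bar>f0 r - f0 l\<bar> \<le> 24 * \<bar>r - l\<bar>"
proof -
  define q where "q = 11/4 - 231/40*(r+l) + 121/40*(r*r+r*l+l*l)"
  have eq: "f0 r - f0 l = (r - l) * q"
    unfolding f0_def q_def by (simp add: power2_eq_square power3_eq_cube field_simps)
  have a: "0 \<le> r*r+r*l+l*l" using assms by simp
  have b: "r*r+r*l+l*l \<le> 3"
  proof -
    have "r*r \<le> 1" "r*l \<le> 1" "l*l \<le> 1" using assms by (simp_all add: mult_le_one)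
    then show ?thesis by simp
  qed
  have c: "0 \<le> r + l" "r + l \<le> 2" using assms by auto
  have L: "abs (11/4 - 231/40 * vv + 121/40 * ss) \<le> (24::real)" if "0 \<le> ss" "ss \<le> 3" "0 \<le> vv" "vv \<le> 2" for ss vv :: real
    using that by (simp add: abs_le_iff)
  have "\<bar>q\<bar> \<le> 24" unfolding q_def using L[OF a b c] .
  then have "\<bar>r - l\<bar> * \<bar>q\<bar> \<le> \<bar>r - l\<bar> * 24" by (simp add: mult_left_mono)
  then show ?thesis by (simp add: eq abs_mult mult.commute)
qed

lemma f0_ac: "abs_continuous_on 0 1 f0"
  unfolding abs_continuous_on_def
proof (intro allI impI)
  fix e :: real assume "e > 0"
  show "\<exists>d>0. \<forall>(n::nat) l r. (\<forall>i<n. 0 \<le> l i \<and> l i \<le> r i \<and> r i \<le> 1) \<and>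
        (\<forall>i<n. \<forall>j<n. i \<noteq> j \<longrightarrow> r i \<le> l j \<or> r j \<le> l i) \<and>
        (\<Sum>i<n. r i - l i) < d \<longrightarrow> (\<Sum>i<n. \<bar>f0 (r i) - f0 (l i)\<bar>) < e"
  proof (intro exI[of _ "e/24"] conjI allI impI)
    show "e/24 > 0" using \<open>e > 0\<close> by simp
    fix n :: nat and l r :: "nat \<Rightarrow> real"
    assume H: "(\<forall>i<n. 0 \<le> l i \<and> l i \<le> r i \<and> r i \<le> 1) \<and>
        (\<forall>i<n. \<forall>j<n. i \<noteq> j \<longrightarrow> r i \<le> l j \<or> r j \<le> l i) \<and> (\<Sum>i<n. r i - l i) < e/24"
    have "(\<Sum>i<n. \<bar>f0 (r i) - f0 (l i)\<bar>) \<le> (\<Sum>i<n. 24 * (r i - l i))"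
    proof (rule sum_mono)
      fix i assume "i \<in> {..<n}"
      then have "0 \<le> l i" "l i \<le> r i" "r i \<le> 1" using H by auto
      then show "\<bar>f0 (r i) - f0 (l i)\<bar> \<le> 24 * (r i - l i)"
        using f0_lip[of "l i" "r i"] by simp
    qed
    also have "\<dots> = 24 * (\<Sum>i<n. r i - l i)" by (simp add: sum_distrib_left)
    also have "\<dots> < e" using H by simp
    finally show "(\<Sum>i<n. \<bar>f0 (r i) - f0 (l i)\<bar>) < e" .
  qed
qed

lemma f0_U1: "f0 \<in> U1"
  unfolding U1_def
proof (intro CollectI conjI exI[of _ f0'])
  show "abs_continuous_on 0 1 f0" by (rule f0_ac)
  show "f0 0 = 0" by (simp add: f0_def)
  show "AE s in lebesgue. s \<in> {0..1} \<longrightarrow> (f0 has_real_derivative f0' s) (at s within {0..1})"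
    by (simp add: f0_deriv)
qed (use f0'_sq_integral in \<open>auto simp: integral_unique\<close>)

lemma f0_integral: "(f0 has_integral (11/8*t^2 - 77/40*t^3 + 121/160*t^4)) {0..t}" if "0 \<le> t"
proof -
  define F where "F t = 11/8*t^2 - 77/40*t^3 + 121/160*t^4" for t :: real
  have "(f0 has_integral F t - F 0) {0..t}"
  proof (rule fundamental_theorem_of_calculus)
    fix x :: real assume "x \<in> {0..t}"
    have "(F has_real_derivative f0 x) (at x within {0..t})"
      unfolding F_def f0_def
      by (rule derivative_eq_intros refl | simp add: eval_nat_numeral algebra_simps)+
    then show "(F has_vector_derivative f0 x) (at x within {0..t})"
      by (simp add: has_real_derivative_iff_has_vector_derivative)
  qed (use that in simp)
  then show ?thesis by (simp add: F_def)
qed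

lemma gmean_f0: "gmean f0 t = g0 t" if "0 \<le> t"
proof (cases "t = 0")
  case True then show ?thesis by (simp add: gmean_def g0_def)
next
  case False
  have "integral {0..t} f0 = 11/8*t^2 - 77/40*t^3 + 121/160*t^4"
    using f0_integral[OF that] by (simp add: integral_unique)
  then show ?thesis using False
    by (simp add: gmean_def g0_def field_simps eval_nat_numeral)
qed

definition R0 :: "(real \<times> real) set" where
  "R0 = {p. 0 \<le> fst p \<and> fst p \<le> 1 \<and> 33/160 * fst p \<le> snd p \<and> snd p \<le> g0 (fst p)}"

lemma R0_sub: "R0 \<subseteq> Hull (gmean f0)"
proof
  fix p assume "p \<in> R0"
  obtain x y where p: "p = (x, y)" by (cases p)
  have x: "0 \<le> x" "x \<le> 1" and y: "33/160 * x \<le> y" "y \<le> g0 x" using \<open>p \<in> R0\<close> by (auto simp: R0_def p)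
  let ?H = "Hull (gmean f0)"
  have cv: "convex ?H" unfolding Hull_def by (rule convex_convex_hull)
  have inH: "(t, g0 t) \<in> ?H" if "0 \<le> t" "t \<le> 1" for t
  proof -
    have "(t, gmean f0 t) \<in> (\<lambda>t. (t, gmean f0 t)) ` {0..1}" using that by auto
    then show ?thesis unfolding Hull_def using gmean_f0[of t] that by (metis hull_inc)
  qed
  have "(1 - x) *\<^sub>R (0, g0 0) + x *\<^sub>R (1, g0 1) \<in> ?H"
    using convexD[OF cv inH[of 0] inH[of 1], of "1 - x" x] x by simp
  moreover have "(1 - x) *\<^sub>R (0, g0 0) + x *\<^sub>R (1, g0 1) = (x, 33/160 * x)" by (simp add: g0_def)
  ultimately have A: "(x, 33/160 * x) \<in> ?H" by (simp only:)
  have B: "(x, g0 x) \<in> ?H" using inH x by simp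
  have gx: "33/160 * x \<le> g0 x" using y by simp
  show "p \<in> ?H"
  proof (cases "g0 x - 33/160*x = 0")
    case True
    then have "y = g0 x" using y by linarith
    then show ?thesis using B p by simp
  next
    case False
    define u where "u = (y - 33/160*x) / (g0 x - 33/160*x)"
    have u: "0 \<le> u" "u \<le> 1" using y False gx by (auto simp: u_def divide_simps)
    have "(1 - u) *\<^sub>R (x, 33/160 * x) + u *\<^sub>R (x, g0 x) \<in> ?H"
      using convexD[OF cv A B, of "1 - u" u] u by simp
    moreover have "(1 - u) *\<^sub>R (x, c) + u *\<^sub>R (x, g) = (x, c + u * (g - c))" for c g
      by (simp add: algebra_simps)
    moreover have "u * (g0 x - 33/160*x) = y - 33/160*x" using False by (simp add: u_def)
    ultimately show ?thesis using p by (metis add_diff_cancel_left' diff_add_cancel)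
  qed
qed

lemma d0_integral: "((\<lambda>x. g0 x - 33/160 * x) has_integral 253/1920) {0..1}"
proof -
  define F where "F t = 187/320*t^2 - 77/120*t^3 + 121/640*t^4" for t :: real
  have "((\<lambda>x. g0 x - 33/160 * x) has_integral F 1 - F 0) {0..1}"
  proof (rule fundamental_theorem_of_calculus)
    fix x :: real assume "x \<in> {0..1}"
    have "(F has_real_derivative (g0 x - 33/160 * x)) (at x within {0..1})"
      unfolding F_def g0_def
      by (rule derivative_eq_intros refl | simp add: eval_nat_numeral algebra_simps)+
    then show "(F has_vector_derivative (g0 x - 33/160 * x)) (at x within {0..1})"
      by (simp add: has_real_derivative_iff_has_vector_derivative)
  qed simp
  then show ?thesis by (simp add: F_def)
qed

lemma d0_nonneg: "0 \<le> g0 x - 33/160 * x" if "0 \<le> x" "x \<le> 1"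
proof -
  have "g0 x - 33/160 * x = 11/160 * x * (1 - x) * (17 - 11 * x)"
    by (simp add: g0_def power2_eq_square power3_eq_cube algebra_simps)
  moreover have "0 \<le> 11/160 * x * (1 - x) * (17 - 11 * x)" using that by simp
  ultimately show ?thesis by simp
qed

lemma R0_closed: "closed R0"
proof -
  have eq: "R0 = {p. 0 \<le> fst p} \<inter> {p. fst p \<le> 1} \<inter> {p. 33/160 * fst p \<le> snd p} \<inter> {p. snd p \<le> g0 (fst p)}"
    by (auto simp: R0_def)
  have c4: "closed {p::real\<times>real. snd p \<le> g0 (fst p)}"
    unfolding g0_def by (intro closed_Collect_le continuous_intros)
  have c1: "closed {p::real\<times>real. 0 \<le> fst p}" by (intro closed_Collect_le continuous_intros)
  have c2: "closed {p::real\<times>real. fst p \<le> 1}" by (intro closed_Collect_le continuous_intros)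
  have c3: "closed {p::real\<times>real. 33/160 * fst p \<le> snd p}" by (intro closed_Collect_le continuous_intros)
  show ?thesis by (subst eq) (intro closed_Int c1 c2 c3 c4)
qed

lemma R0_measure: "R0 \<in> sets lebesgue \<and> measure lebesgue R0 = 253/1920"
proof -
  have B: "R0 \<in> sets borel" using R0_closed by (rule borel_closed)
  then have B2: "R0 \<in> sets (lborel \<Otimes>\<^sub>M lborel)" by (subst lborel_prod) simp
  have sl: "Pair x -` R0 = (if 0 \<le> x \<and> x \<le> 1 then {33/160 * x .. g0 x} else {})" for x
    by (auto simp: R0_def)
  have em: "emeasure lborel (Pair x -` R0) = ennreal (g0 x - 33/160 * x) * indicator {0..1} x" for x
    using d0_nonneg[of x] by (auto simp: sl indicator_def)
  have "emeasure lborel R0 = emeasure (lborel \<Otimes>\<^sub>M lborel) R0" by (simp add: lborel_prod)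
  also have "\<dots> = (\<integral>\<^sup>+x. emeasure lborel (Pair x -` R0) \<partial>lborel)"
    by (rule lborel.emeasure_pair_measure_alt[OF B2])
  also have "\<dots> = (\<integral>\<^sup>+x. ennreal (g0 x - 33/160 * x) * indicator {0..1} x \<partial>lborel)"
    by (simp add: em)
  also have "\<dots> = ennreal (253/1920)"
    by (rule nn_integral_has_integral_lebesgue'[OF _ d0_integral]) (use d0_nonneg in auto)
  finally have "emeasure lborel R0 = ennreal (253/1920)" .
  then have "measure lborel R0 = 253/1920" by (simp add: measure_def)
  then show ?thesis using B by simp
qed



lemma gmean_bound:
  assumes f: "f \<in> U1" and t: "t \<in> {0..1}"
  shows "\<bar>gmean f t\<bar> \<le> 1"
proof (cases "t = 0")
  case True then show ?thesis by (simp add: gmean_def)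
next
  case False
  then have tp: "0 < t" using t by auto
  have ac: "abs_continuous_on 0 1 f" using f by (simp add: U1_def)
  have cont: "continuous_on {0..t} f"
    by (rule continuous_on_subset[OF ac_cont[OF ac]]) (use t in auto)
  have "norm (integral {0..t} f) \<le> 1 * (t - 0)"
    by (rule integral_bound[OF _ cont]) (use t tp U1_bound[OF f] in auto)
  then have "\<bar>integral {0..t} f\<bar> \<le> t" by simp
  then show ?thesis using tp by (simp add: gmean_def abs_mult divide_le_eq_1 abs_div)
qed

lemma hull_bound:
  assumes f: "f \<in> U1"
  shows "Hull (gmean f) \<in> lmeasurable \<and> measure lebesgue (Hull (gmean f)) \<le> 2"
proof -
  let ?B = "cbox (0::real, -1::real) (1, 1)"
  have sub: "Hull (gmean f) \<subseteq> ?B"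
    unfolding Hull_def
  proof (rule hull_minimal)
    show "(\<lambda>t. (t, gmean f t)) ` {0..1} \<subseteq> ?B"
      using gmean_bound[OF f] by (auto simp: abs_le_iff)
    show "convex ?B" by (rule convex_box)
  qed
  have cv: "convex (Hull (gmean f))" unfolding Hull_def by (rule convex_convex_hull)
  have bd: "bounded (Hull (gmean f))" by (rule bounded_subset[OF bounded_cbox sub])
  have m: "Hull (gmean f) \<in> lmeasurable" by (rule measurable_convex[OF cv bd])
  have "measure lebesgue (Hull (gmean f)) \<le> measure lebesgue ?B"
    by (rule measure_mono_fmeasurable[OF sub]) (use m in auto)
  also have "measure lebesgue ?B = 2"
    by (simp add: content_Pair)
  finally show ?thesis using m by simp
qed

theorem propositionA1:
  shows "theta \<ge> 0.090435"
proof -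
  define A where "A = {area (Hull (gmean f)) | f. f \<in> U1}"
  have bdd: "bdd_above A"
    unfolding A_def bdd_above_def using hull_bound by (auto simp: area_def)
  have inA: "area (Hull (gmean f0)) \<in> A" unfolding A_def using f0_U1 by blast
  have "253/1920 = measure lebesgue R0" using R0_measure by simp
  also have "\<dots> \<le> area (Hull (gmean f0))"
    unfolding area_def
    by (rule measure_mono_fmeasurable[OF R0_sub]) (use R0_measure hull_bound[OF f0_U1] in auto)
  also have "\<dots> \<le> Sup A" by (rule cSup_upper[OF inA bdd])
  finally have SA: "253/1920 \<le> Sup A" .
  have s2: "sqrt 2 \<le> (1.4143::real)" by (rule real_le_lsqrt) (simp_all add: power2_eq_square)
  have s0: "0 < sqrt (2::real)" by simp
  have "0.090435 * sqrt 2 \<le> 0.090435 * (1.4143::real)" using s2 by simp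
  also have "\<dots> \<le> 253/1920" by simp
  also have "\<dots> \<le> Sup A" by (rule SA)
  finally have "0.090435 * sqrt 2 \<le> Sup A" .
  then have "0.090435 \<le> Sup A / sqrt 2" using s0 by (simp add: le_divide_eq)
  then show ?thesis unfolding theta_def A_def by simp
qed


end
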